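(* Let $D$ be a Euclidean domain with fraction field $K$, and let $R$ be the subring of $K$ generated by $\{1/d \mid d \in D\setminus\{0\}\}$. If $D \not\subseteq R$ (equivalently, $R \neq K$), then $R \cap D$ equals the set of units of $D$ together with $0$. In particular, the units of $D$ together with $0$ form a field contained in $D$.
   Context: A Euclidean function on an integral domain $D$ is a function $f: D\setminus\{0\} \to \mathbb{Z}$ such that for all nonzero $a,b \in D$: (1) $f(ab) \geq f(a)$, and (2) there exist $q,r \in D$ with $b = aq + r$ and either $r=0$ or $f(r) < f(a)$. A Euclidean domain is an integral domain admitting a Euclidean function. *)

theory Defs
  imports "HOL-Computational_Algebra.Fraction_Field"
begin

text \<open>Euclidean function on an integral domain, exactly as in the paper:
  integer-valued on nonzero elements (values at 0 are irrelevant).\<close>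
definition euclidean_function :: "('a::idom \<Rightarrow> int) \<Rightarrow> bool" where
  "euclidean_function f \<longleftrightarrow>
     (\<forall>a b. a \<noteq> 0 \<longrightarrow> b \<noteq> 0 \<longrightarrow>
        f (a * b) \<ge> f a \<and>
        (\<exists>q r. b = a * q + r \<and> (r = 0 \<or> f r < f a)))"

definition euclidean_domain :: "'a::idom itself \<Rightarrow> bool" where
  "euclidean_domain _ \<longleftrightarrow> (\<exists>f::'a \<Rightarrow> int. euclidean_function f)"

definition emb :: "'a::idom \<Rightarrow> 'a fract" where
  "emb a = Fract a 1"

definition subring_generated :: "'b::comm_ring_1 set \<Rightarrow> 'b set" where
  "subring_generated S = \<Inter>{T. S \<subseteq> T \<and> 1 \<in> T \<and>
      (\<forall>x\<in>T. \<forall>y\<in>T. x + y \<in> T \<and> x - y \<in> T \<and> x * y \<in> T)}"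

definition inv_ring :: "'a::idom fract set" where
  "inv_ring = subring_generated {1 / emb d | d. d \<noteq> 0}"

end

theory Submission
  imports Defs
begin

lemma sg_sub: "x \<in> S \<Longrightarrow> x \<in> subring_generated S"
  unfolding subring_generated_def by blast
lemma sg_one: "1 \<in> subring_generated S"
  unfolding subring_generated_def by blast
lemma sg_closed:
  assumes "x \<in> subring_generated S" "y \<in> subring_generated S"
  shows "x + y \<in> subring_generated S \<and> x - y \<in> subring_generated S \<and> x * y \<in> subring_generated S"
  using assms unfolding subring_generated_def by blast

lemma R_add: "x \<in> inv_ring \<Longrightarrow> y \<in> inv_ring \<Longrightarrow> x + y \<in> inv_ring"
  unfolding inv_ring_def using sg_closed by blast
lemma R_diff: "x \<in> inv_ring \<Longrightarrow> y \<in> inv_ring \<Longrightarrow> x - y \<in> inv_ring"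
  unfolding inv_ring_def using sg_closed by blast
lemma R_mult: "x \<in> inv_ring \<Longrightarrow> y \<in> inv_ring \<Longrightarrow> x * y \<in> inv_ring"
  unfolding inv_ring_def using sg_closed by blast
lemma R_one: "1 \<in> inv_ring"
  unfolding inv_ring_def using sg_one by blast
lemma R_zero: "0 \<in> inv_ring"
  using R_diff[OF R_one R_one] by simp
lemma R_inv: "d \<noteq> 0 \<Longrightarrow> 1 / emb d \<in> inv_ring"
  unfolding inv_ring_def by (rule sg_sub) blast

lemma emb_add: "emb (a + b) = emb a + emb b" by (simp add: emb_def)
lemma emb_diff: "emb (a - b) = emb a - emb b" by (simp add: emb_def)
lemma emb_mult: "emb (a * b) = emb a * emb b" by (simp add: emb_def)
lemma emb_0: "emb 0 = 0" by (simp add: emb_def Zero_fract_def)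
lemma emb_1: "emb 1 = 1" by (simp add: emb_def One_fract_def)
lemma emb_eq: "(emb a = emb b) = (a = b)" by (simp add: emb_def eq_fract)
lemma emb_eq0: "(emb a = 0) = (a = 0)" using emb_eq[of a 0] by (simp add: emb_0)

lemma R_divisor:
  assumes "emb (x * y) \<in> inv_ring" "y \<noteq> 0"
  shows "emb x \<in> inv_ring"
proof -
  have "emb x = emb (x*y) * (1 / emb y)"
    using assms(2) by (simp add: emb_mult emb_eq0)
  thus ?thesis using R_mult[OF assms(1) R_inv[OF assms(2)]] by simp
qed

lemma R_unit:
  assumes "(u::'a::idom) dvd 1" shows "emb u \<in> inv_ring"
proof -
  from assms obtain v where v: "1 = u * v" by (auto elim: dvdE)
  hence "emb (u * v) \<in> inv_ring" using R_one emb_1 by metis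
  moreover have "v \<noteq> 0" using v by auto
  ultimately show ?thesis using R_divisor by blast
qed

lemma f_ge1:
  assumes "euclidean_function f" "b \<noteq> 0"
  shows "f b \<ge> f 1"
  using assms unfolding euclidean_function_def
  by (metis mult_1 one_neq_zero)

lemma f_strict:
  fixes a x :: "'a::idom"
  assumes ef: "euclidean_function f" and x: "x \<noteq> 0" and a: "a \<noteq> 0" "\<not> a dvd 1"
  shows "f (x * a) > f x"
proof -
  have xa: "x * a \<noteq> 0" using x a by simp
  from ef xa x obtain q r where qr: "x = x * a * q + r" and rr: "r = 0 \<or> f r < f (x*a)"
    unfolding euclidean_function_def by blast
  have ge: "f (x * a) \<ge> f x" using ef x a unfolding euclidean_function_def by blast
  have r: "r = x * (1 - a * q)" using qr by (simp add: algebra_simps)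
  show ?thesis
  proof (cases "r = 0")
    case True
    hence "x * 1 = x * (a * q)" using qr by (simp add: algebra_simps)
    hence "a * q = 1" using x by (metis mult_left_cancel)
    hence "a dvd 1" by (metis dvd_triv_left)
    thus ?thesis using a by blast
  next
    case False
    hence "1 - a * q \<noteq> 0" using r by auto
    hence "f r \<ge> f x" using ef x r unfolding euclidean_function_def by blast
    thus ?thesis using rr False ge by linarith
  qed
qed

lemma f_pow:
  fixes a :: "'a::idom"
  assumes ef: "euclidean_function f" and a: "a \<noteq> 0" "\<not> a dvd 1"
  shows "f (a ^ n) \<ge> f 1 + int n"
proof (induction n)
  case 0 then show ?case by simp
next
  case (Suc n)
  have "f (a ^ n * a) > f (a ^ n)" using f_strict[OF ef _ a] a by simp
  thus ?case using Suc by (simp add: mult.commute)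
qed

lemma main:
  fixes a b :: "'a::idom" and f :: "'a \<Rightarrow> int"
  assumes ef: "euclidean_function f" and a: "a \<noteq> 0" "\<not> a dvd 1"
    and aR: "emb a \<in> inv_ring"
  shows "emb b \<in> inv_ring"
proof (induction "nat (f b - f 1)" arbitrary: b rule: less_induct)
  case less
  show ?case
  proof (cases "b = 0")
    case True then show ?thesis using R_zero by (simp add: emb_0)
  next
    case b: False
    define n where "n = nat (f b - f 1)"
    have pn: "f (a ^ n) \<ge> f b" using f_pow[OF ef a, of n] n_def f_ge1[OF ef b] by simp
    have an: "a ^ n \<noteq> 0" using a by simp
    from ef b an obtain q r where qr: "a ^ n = b * q + r" and rr: "r = 0 \<or> f r < f b"
      unfolding euclidean_function_def by blast
    have rR: "emb r \<in> inv_ring"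
    proof (cases "r = 0")
      case True then show ?thesis using R_zero by (simp add: emb_0)
    next
      case False
      hence "f r < f b" "f r \<ge> f 1" "f b \<ge> f 1" using rr f_ge1[OF ef] b by auto
      hence "nat (f r - f 1) < nat (f b - f 1)" by linarith
      thus ?thesis using less by blast
    qed
    have q: "q \<noteq> 0"
    proof
      assume "q = 0"
      hence "r = a ^ n" using qr by simp
      thus False using rr an pn by auto
    qed
    have pR: "emb (a ^ n) \<in> inv_ring"
    proof (induction n)
      case 0 then show ?case using R_one by (simp add: emb_1)
    next
      case (Suc n) then show ?case using R_mult[OF Suc aR] by (simp add: emb_mult mult.commute)
    qed
    have "b * q = a ^ n - r" using qr by simp
    hence "emb (b * q) \<in> inv_ring" using R_diff[OF pR rR] by (simp add: emb_diff)
    thus ?thesis using R_divisor q by blast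
  qed
qed

theorem proposition2p11:
  assumes "euclidean_domain TYPE('a::idom)"
    and "\<not> (\<forall>a::'a. emb a \<in> inv_ring)"
  shows "{a::'a. emb a \<in> inv_ring} = {a. a dvd 1} \<union> {0} \<and>
         0 \<in> {a::'a. a dvd 1} \<union> {0} \<and> 1 \<in> {a::'a. a dvd 1} \<union> {0} \<and>
         (\<forall>x \<in> {a::'a. a dvd 1} \<union> {0}. \<forall>y \<in> {a. a dvd 1} \<union> {0}.
            x + y \<in> {a. a dvd 1} \<union> {0} \<and> x - y \<in> {a. a dvd 1} \<union> {0} \<and>
            x * y \<in> {a. a dvd 1} \<union> {0}) \<and>
         (\<forall>x \<in> {a::'a. a dvd 1} \<union> {0}. x \<noteq> 0 \<longrightarrow>
            (\<exists>y \<in> {a. a dvd 1} \<union> {0}. x * y = 1))"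
proof -
  obtain f :: "'a \<Rightarrow> int" where ef: "euclidean_function f"
    using assms(1) unfolding euclidean_domain_def by blast
  have eq: "{a::'a. emb a \<in> inv_ring} = {a. a dvd 1} \<union> {0}"
  proof
    show "{a::'a. emb a \<in> inv_ring} \<subseteq> {a. a dvd 1} \<union> {0}"
    proof
      fix a :: 'a assume "a \<in> {a. emb a \<in> inv_ring}"
      hence aR: "emb a \<in> inv_ring" by simp
      show "a \<in> {a. a dvd 1} \<union> {0}"
      proof (rule ccontr)
        assume "a \<notin> {a. a dvd 1} \<union> {0}"
        hence "a \<noteq> 0" "\<not> a dvd 1" by auto
        thus False using main[OF ef _ _ aR] assms(2) by blast
      qed
    qed
  next
    show "{a. a dvd 1} \<union> {0} \<subseteq> {a::'a. emb a \<in> inv_ring}"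
      using R_unit R_zero by (auto simp: emb_0)
  qed
  have cl: "\<forall>x \<in> {a::'a. a dvd 1} \<union> {0}. \<forall>y \<in> {a. a dvd 1} \<union> {0}.
            x + y \<in> {a. a dvd 1} \<union> {0} \<and> x - y \<in> {a. a dvd 1} \<union> {0} \<and>
            x * y \<in> {a. a dvd 1} \<union> {0}"
  proof (intro ballI)
    fix x y :: 'a assume "x \<in> {a. a dvd 1} \<union> {0}" "y \<in> {a. a dvd 1} \<union> {0}"
    hence "emb x \<in> inv_ring" "emb y \<in> inv_ring" using eq by blast+
    hence "emb (x + y) \<in> inv_ring" "emb (x - y) \<in> inv_ring" "emb (x * y) \<in> inv_ring"
      using R_add R_diff R_mult by (auto simp: emb_add emb_diff emb_mult)
    thus "x + y \<in> {a. a dvd 1} \<union> {0} \<and> x - y \<in> {a. a dvd 1} \<union> {0} \<and>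
            x * y \<in> {a. a dvd 1} \<union> {0}" using eq by blast
  qed
  have inv: "\<forall>x \<in> {a::'a. a dvd 1} \<union> {0}. x \<noteq> 0 \<longrightarrow>
            (\<exists>y \<in> {a. a dvd 1} \<union> {0}. x * y = 1)"
  proof (intro ballI impI)
    fix x :: 'a assume "x \<in> {a. a dvd 1} \<union> {0}" "x \<noteq> 0"
    hence "x dvd 1" by auto
    then obtain y where y: "1 = x * y" by (auto elim: dvdE)
    hence "y dvd 1" by (metis dvd_triv_right)
    thus "\<exists>y \<in> {a. a dvd 1} \<union> {0}. x * y = 1" using y by auto
  qed
  show ?thesis using eq cl inv by auto
qed

end
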